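(* If $K_1,\ldots,K_d\subset\mathbb C$ are compact sets that are regular closed (i.e. $\overline{K_i^\circ}=K_i$ for each $i$), then \[ A(K_1\times\cdots\times K_d)=A_D(K_1\times\cdots\times K_d). \]
   Context: For a compact set $K\subset\mathbb C^d$: $A(K)$ is the algebra of continuous functions $K\to\mathbb C$ holomorphic on the interior $K^\circ$; $A_D(K)$ is the set of continuous functions $f:K\to\mathbb C$ such that for every open disc $D\subset\mathbb C$ and every injective holomorphic mapping $\phi:D\to\mathbb C^d$ with $\phi(D)\subset K$, the composition $f\circ\phi$ is holomorphic on $D$. *)

theory Defs
  imports "HOL-Complex_Analysis.Complex_Analysis"
begin

text \<open>C^d is modelled as complex ^ 'n for a finite index type 'n (d = CARD('n)).\<close>

definition complex_linear_vec :: "(complex ^ 'n \<Rightarrow> complex) \<Rightarrow> bool" where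
  "complex_linear_vec L \<longleftrightarrow> bounded_linear L \<and> (\<forall>c v. L (c *s v) = c * L v)"

definition holo_vec_on :: "(complex ^ 'n \<Rightarrow> complex) \<Rightarrow> (complex ^ 'n) set \<Rightarrow> bool" where
  "holo_vec_on f U \<longleftrightarrow> (\<forall>z\<in>U. \<exists>L. complex_linear_vec L \<and> (f has_derivative L) (at z))"

definition A_alg :: "(complex ^ 'n) set \<Rightarrow> (complex ^ 'n \<Rightarrow> complex) set" where
  "A_alg K = {f. continuous_on K f \<and> holo_vec_on f (interior K)}"

definition A_D :: "(complex ^ 'n) set \<Rightarrow> (complex ^ 'n \<Rightarrow> complex) set" where
  "A_D K = {f. continuous_on K f \<and>
     (\<forall>(a::complex) (r::real) (\<phi>::complex \<Rightarrow> complex ^ 'n).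
        r > 0 \<and> (\<forall>i. (\<lambda>z. \<phi> z $ i) holomorphic_on ball a r) \<and> inj_on \<phi> (ball a r)
        \<and> \<phi> ` ball a r \<subseteq> K \<longrightarrow> (f \<circ> \<phi>) holomorphic_on ball a r)}"

definition prod_set :: "('n \<Rightarrow> complex set) \<Rightarrow> (complex ^ 'n) set" where
  "prod_set K = {z. \<forall>i. z $ i \<in> K i}"

end

theory Submission
  imports Defs
begin


lemma vec_has_derivative:
  fixes f :: "'a::real_normed_vector \<Rightarrow> complex ^ 'n"
  assumes "\<And>i. ((\<lambda>x. f x $ i) has_derivative (\<lambda>h. f' h $ i)) (at a within S)"
  shows "(f has_derivative f') (at a within S)"
proof (subst has_derivative_componentwise_within, intro ballI)
  fix b :: "complex ^ 'n" assume "b \<in> Basis"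
  then obtain i c where b: "b = axis i c" "c \<in> Basis" by (auto simp: Basis_vec_def)
  have "((\<lambda>x. f x $ i \<bullet> c) has_derivative (\<lambda>h. f' h $ i \<bullet> c)) (at a within S)"
    using assms[of i] by (intro has_derivative_inner_left)
  then show "((\<lambda>x. f x \<bullet> b) has_derivative (\<lambda>x. f' x \<bullet> b)) (at a within S)"
    using b by (simp add: inner_axis)
qed


lemma comp_holo:
  fixes f :: "complex ^ 'n \<Rightarrow> complex" and \<psi> :: "complex \<Rightarrow> complex ^ 'n"
  assumes hf: "holo_vec_on f U" and "open S"
    and hp: "\<And>i. (\<lambda>z. \<psi> z $ i) holomorphic_on S" and sub: "\<psi> ` S \<subseteq> U"
  shows "(f \<circ> \<psi>) holomorphic_on S"
proof -
  have "\<exists>f'. ((f \<circ> \<psi>) has_field_derivative f') (at w)" if w: "w \<in> S" for w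
  proof -
    have "\<forall>i. \<exists>d. ((\<lambda>z. \<psi> z $ i) has_field_derivative d) (at w)"
      using hp w \<open>open S\<close> by (simp add: holomorphic_on_open)
    then obtain d where d: "\<And>i. ((\<lambda>z. \<psi> z $ i) has_field_derivative d i) (at w)" by metis
    define dv where "dv = (\<chi> i. d i)"
    have pd: "(\<psi> has_derivative (\<lambda>h. h *s dv)) (at w)"
      apply (rule vec_has_derivative)
      using d by (simp add: dv_def has_field_derivative_def mult.commute[of _ "d _"])
    obtain L where L: "complex_linear_vec L" "(f has_derivative L) (at (\<psi> w))"
      using hf sub w unfolding holo_vec_on_def by blast
    have "((f \<circ> \<psi>) has_derivative (L \<circ> (\<lambda>h. h *s dv))) (at w)"
      by (rule diff_chain_at[OF pd L(2)])
    moreover have "(L \<circ> (\<lambda>h. h *s dv)) = (*) (L dv)"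
      using L(1) by (auto simp: complex_linear_vec_def fun_eq_iff mult.commute)
    ultimately show ?thesis by (auto simp: has_field_derivative_def)
  qed
  then show ?thesis using \<open>open S\<close> by (simp add: holomorphic_on_open)
qed


lemma prod_set_eq: "prod_set K = (\<Inter>i. (\<lambda>x. x $ i) -` K i)"
  by (auto simp: prod_set_def)

lemma dist_vec_le_sum: "dist (x::'a::metric_space ^ 'n) y \<le> (\<Sum>i\<in>UNIV. dist (x$i) (y$i))"
  unfolding dist_vec_def by (rule L2_set_le_sum) simp

lemma compact_prod_set:
  fixes K :: "'n::finite \<Rightarrow> complex set"
  assumes "\<And>i. compact (K i)"
  shows "compact (prod_set K)"
proof -
  have "closed (prod_set K)"
    unfolding prod_set_eq using assms
    by (intro closed_INT ballI closed_vimage_vec_nth compact_imp_closed) auto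
  moreover have "bounded (prod_set K)"
  proof -
    have "\<forall>i. \<exists>B. \<forall>x\<in>K i. norm x \<le> B"
      using assms compact_imp_bounded bounded_iff by metis
    then obtain B where B: "\<And>i x. x \<in> K i \<Longrightarrow> norm x \<le> B i" by metis
    have "norm z \<le> (\<Sum>i\<in>UNIV. B i)" if "z \<in> prod_set K" for z
    proof -
      have "norm z = dist z 0" by simp
      also have "\<dots> \<le> (\<Sum>i\<in>UNIV. dist (z$i) (0$i))" by (rule dist_vec_le_sum)
      also have "\<dots> \<le> (\<Sum>i\<in>UNIV. B i)"
        using that B by (intro sum_mono) (auto simp: prod_set_def dist_norm)
      finally show ?thesis .
    qed
    then show ?thesis unfolding bounded_iff by blast
  qed
  ultimately show ?thesis by (simp add: compact_eq_bounded_closed)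
qed

lemma interior_prod_set:
  fixes K :: "'n::finite \<Rightarrow> complex set"
  shows "{z. \<forall>i. z $ i \<in> interior (K i)} \<subseteq> interior (prod_set K)"
proof (rule interior_maximal)
  show "{z. \<forall>i. z $ i \<in> interior (K i)} \<subseteq> prod_set K"
    using interior_subset by (fastforce simp: prod_set_def)
  have "{z. \<forall>i. z $ i \<in> interior (K i)} = (\<Inter>i. (\<lambda>x. x $ i) -` interior (K i))" by auto
  then show "open {z. \<forall>i. z $ i \<in> interior (K i)}"
    by (simp add: open_INT open_vimage_vec_nth)
qed

lemma A_sub_AD:
  fixes K :: "'n::finite \<Rightarrow> complex set" and \<phi> :: "complex \<Rightarrow> complex ^ 'n"
  assumes cK: "\<And>i. compact (K i)"
    and rK: "\<And>i. closure (interior (K i)) = K i"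
    and fA: "f \<in> A_alg (prod_set K)"
    and r: "r > 0" and hphi: "\<And>i. (\<lambda>z. \<phi> z $ i) holomorphic_on ball a r"
    and sub: "\<phi> ` ball a r \<subseteq> prod_set K"
  shows "(f \<circ> \<phi>) holomorphic_on ball a r"
proof -
  define J where "J = {i. \<not> (\<lambda>z. \<phi> z $ i) constant_on ball a r}"
  have inJ: "\<phi> z $ i \<in> interior (K i)" if "i \<in> J" "z \<in> ball a r" for i z
  proof -
    have "open ((\<lambda>z. \<phi> z $ i) ` ball a r)"
      using that(1) hphi by (intro open_mapping_thm[where S="ball a r"]) (auto simp: J_def)
    moreover have "(\<lambda>z. \<phi> z $ i) ` ball a r \<subseteq> K i"
      using sub by (auto simp: prod_set_def)
    ultimately have "(\<lambda>z. \<phi> z $ i) ` ball a r \<subseteq> interior (K i)"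
      by (simp add: interior_maximal)
    then show ?thesis using that(2) by auto
  qed
  have notJ: "\<phi> z $ i = \<phi> a $ i" if ni: "i \<notin> J" and z: "z \<in> ball a r" for i z
  proof -
    obtain y where "\<forall>x\<in>ball a r. \<phi> x $ i = y" using ni by (auto simp: J_def constant_on_def)
    then show ?thesis using z r by auto
  qed
  define c where "c i = \<phi> a $ i" for i
  have cK_: "c i \<in> K i" for i
  proof -
    have "a \<in> ball a r" using r by simp
    then have "\<phi> a \<in> prod_set K" using sub by blast
    then show ?thesis by (simp add: c_def prod_set_def)
  qed
  have "\<forall>i n. \<exists>y\<in>interior (K i). dist y (c i) < 1 / Suc n"
    using cK_ rK closure_approachable by (metis of_nat_0_less_iff zero_less_Suc divide_pos_pos zero_less_one)
  then obtain cn where cn: "\<And>i n. cn i n \<in> interior (K i)" "\<And>i n. dist (cn i n) (c i) < 1 / Suc n"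
    by metis
  define \<psi> where "\<psi> n w = (\<chi> i. if i \<in> J then \<phi> w $ i else cn i n)" for n w
  define g where "g n = f \<circ> \<psi> n" for n
  have psi_int: "\<psi> n w \<in> interior (prod_set K)" if "w \<in> ball a r" for n w
    using interior_prod_set[of K] inJ[OF _ that] cn(1) by (auto simp: \<psi>_def)
  have hg: "g n holomorphic_on ball a r" for n
    unfolding g_def
  proof (rule comp_holo[where U="interior (prod_set K)"])
    show "holo_vec_on f (interior (prod_set K))" using fA by (simp add: A_alg_def)
    show "(\<lambda>z. \<psi> n z $ i) holomorphic_on ball a r" for i
      using hphi[of i] by (cases "i \<in> J") (auto simp: \<psi>_def)
  qed (use psi_int in auto)
  have ucf: "uniformly_continuous_on (prod_set K) f"
  proof -
    have "compact (prod_set K)" using cK by (rule compact_prod_set)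
    then show ?thesis using fA compact_uniformly_continuous by (auto simp: A_alg_def)
  qed
  have ulim: "uniform_limit (ball a r) g (f \<circ> \<phi>) sequentially"
  proof (rule uniform_limitI)
    fix e :: real assume "e > 0"
    then obtain d where d: "d > 0" "\<And>x x'. x \<in> prod_set K \<Longrightarrow> x' \<in> prod_set K \<Longrightarrow> dist x' x < d \<Longrightarrow> dist (f x') (f x) < e"
      using ucf unfolding uniformly_continuous_on_def by metis
    obtain N :: nat where N: "real CARD('n) / d < N" using reals_Archimedean2 by blast
    show "\<forall>\<^sub>F n in sequentially. \<forall>x\<in>ball a r. dist (g n x) ((f \<circ> \<phi>) x) < e"
      unfolding eventually_sequentially
    proof (intro exI[of _ N] allI impI ballI)
      fix n x assume n: "N \<le> n" and x: "x \<in> ball a r"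
      have "dist (\<psi> n x) (\<phi> x) \<le> (\<Sum>i\<in>UNIV. dist (\<psi> n x $ i) (\<phi> x $ i))" by (rule dist_vec_le_sum)
      also have "\<dots> \<le> (\<Sum>i\<in>(UNIV::'n set). 1 / Suc n)"
      proof (rule sum_mono)
        fix i :: 'n assume "i \<in> UNIV" show "dist (\<psi> n x $ i) (\<phi> x $ i) \<le> 1 / Suc n"
          using cn(2)[of i n] notJ[OF _ x, of i] by (cases "i \<in> J") (auto simp: \<psi>_def c_def dist_commute)
      qed
      also have "\<dots> = real CARD('n) / Suc n" by simp
      also have "\<dots> < d"
      proof -
        have "real CARD('n) / d < Suc n" using N n by linarith
        then show ?thesis using d(1) by (simp add: divide_less_eq mult.commute)
      qed
      finally have "dist (\<psi> n x) (\<phi> x) < d" .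
      moreover have "\<psi> n x \<in> prod_set K" using psi_int[OF x] interior_subset by blast
      moreover have "\<phi> x \<in> prod_set K" using sub x by blast
      ultimately show "dist (g n x) ((f \<circ> \<phi>) x) < e" using d(2) by (simp add: g_def)
    qed
  qed
  have "(f \<circ> \<phi>) field_differentiable (at w)" if w: "w \<in> ball a r" for w
  proof -
    define \<rho> where "\<rho> = (r - dist a w) / 2"
    have \<rho>: "\<rho> > 0" "cball w \<rho> \<subseteq> ball a r"
    proof -
      show "\<rho> > 0" using w by (simp add: \<rho>_def)
      show "cball w \<rho> \<subseteq> ball a r"
      proof
        fix x assume "x \<in> cball w \<rho>"
        then have "dist w x \<le> \<rho>" by simp
        moreover have "dist a x \<le> dist a w + dist w x" by (rule dist_triangle)
        ultimately show "x \<in> ball a r" using w by (simp add: \<rho>_def)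
      qed
    qed
    obtain "continuous_on (cball w \<rho>) (f \<circ> \<phi>)" "(f \<circ> \<phi>) holomorphic_on ball w \<rho>"
    proof (rule holomorphic_uniform_limit[where f=g and F=sequentially])
      show "\<forall>\<^sub>F n in sequentially. continuous_on (cball w \<rho>) (g n) \<and> g n holomorphic_on ball w \<rho>"
      proof (intro always_eventually allI conjI)
        fix n
        have hc: "g n holomorphic_on cball w \<rho>" using hg \<rho>(2) by (rule holomorphic_on_subset)
        then show "continuous_on (cball w \<rho>) (g n)" by (rule holomorphic_on_imp_continuous_on)
        show "g n holomorphic_on ball w \<rho>" using hc ball_subset_cball by (rule holomorphic_on_subset)
      qed
      show "uniform_limit (cball w \<rho>) g (f \<circ> \<phi>) sequentially"
        using ulim \<rho>(2) by (rule uniform_limit_on_subset)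
    qed auto
    then show ?thesis using \<rho>(1) by (intro holomorphic_on_imp_differentiable_at[of _ "ball w \<rho>"]) auto
  qed
  then show ?thesis by (simp add: holomorphic_on_open field_differentiable_def)
qed


lemma norm_vec_le_sum: "norm (x::'a::real_normed_vector ^ 'n) \<le> (\<Sum>i\<in>UNIV. norm (x$i))"
  unfolding norm_vec_def by (rule L2_set_le_sum) simp

lemma norm_axis_le: "norm (axis k (s::complex) :: complex ^ 'n) \<le> norm s"
proof -
  have "norm (axis k s :: complex ^ 'n) \<le> (\<Sum>i\<in>UNIV. norm ((axis k s :: complex ^ 'n)$i))"
    by (rule norm_vec_le_sum)
  also have "\<dots> = (\<Sum>i\<in>UNIV. if i = k then norm s else 0)"
    by (intro sum.cong) (auto simp: axis_def)
  also have "\<dots> = norm s" by simp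
  finally show ?thesis .
qed

lemma axis_add_c: "axis k (a + b) = axis k a + (axis k b :: complex ^ 'n)"
  by (simp add: vec_eq_iff axis_def)

lemma line_holo:
  fixes f :: "complex ^ 'n \<Rightarrow> complex"
  assumes fD: "f \<in> A_D S" and sub: "cball x r \<subseteq> S" and r: "r > 0"
  shows "(\<lambda>s. f (x + axis k s)) holomorphic_on ball 0 r"
proof -
  define \<phi> where "\<phi> s = x + axis k s" for s :: complex
  have "(f \<circ> \<phi>) holomorphic_on ball 0 r"
    using fD unfolding A_D_def
  proof (elim CollectE conjE allE impE)
    show "0 < r \<and> (\<forall>i. (\<lambda>z. \<phi> z $ i) holomorphic_on ball 0 r) \<and> inj_on \<phi> (ball 0 r) \<and> \<phi> ` ball 0 r \<subseteq> S"
    proof (intro conjI allI)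
      show "0 < r" by fact
      fix i :: 'n
      show "(\<lambda>z. \<phi> z $ i) holomorphic_on ball 0 r"
        by (cases "i = k") (auto simp: \<phi>_def axis_def intro!: holomorphic_intros)
    next
      show "inj_on \<phi> (ball 0 r)" by (auto simp: inj_on_def \<phi>_def axis_eq_axis)
      show "\<phi> ` ball 0 r \<subseteq> S"
      proof
        fix y assume "y \<in> \<phi> ` ball 0 r"
        then obtain s where s: "norm s < r" "y = x + axis k s" by (auto simp: \<phi>_def)
        have "dist x y \<le> r" using s norm_axis_le[of k s] by (simp add: dist_norm)
        then show "y \<in> S" using sub by auto
      qed
    qed
  qed
  then show ?thesis by (simp add: \<phi>_def o_def)
qed


lemma AD_point:
  fixes f :: "complex ^ 'n::finite \<Rightarrow> complex"
  assumes fD: "f \<in> A_D S" and z: "z \<in> interior S"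
  shows "\<exists>L. complex_linear_vec L \<and> (f has_derivative L) (at z)"
proof -
  obtain e0 where e0: "e0 > 0" "cball z e0 \<subseteq> interior S"
    using z open_interior open_contains_cball by blast
  define \<epsilon> where "\<epsilon> = e0 / 3"
  have \<epsilon>: "\<epsilon> > 0" "cball z (3*\<epsilon>) \<subseteq> S"
    using e0 interior_subset by (auto simp: \<epsilon>_def)
  have cont: "continuous_on S f" using fD by (simp add: A_D_def)
  define P where "P k y = deriv (\<lambda>s. f (y + axis k s)) 0" for k y
  have hol: "(\<lambda>s. f (y + axis k s)) holomorphic_on ball 0 (2*\<epsilon>)" if y: "y \<in> cball z \<epsilon>" for y k
  proof (rule line_holo[OF fD])
    show "cball y (2*\<epsilon>) \<subseteq> S"
    proof
      fix u assume "u \<in> cball y (2*\<epsilon>)"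
      then have "dist z u \<le> 3*\<epsilon>" using y dist_triangle[of z u y] by simp
      then show "u \<in> S" using \<epsilon>(2) by auto
    qed
  qed (use \<epsilon> in simp)
  have derP: "((\<lambda>s. f (y + axis k s)) has_field_derivative P k y) (at 0)" if y: "y \<in> cball z \<epsilon>" for y k
    unfolding P_def using hol[OF y] \<epsilon>(1) by (intro holomorphic_derivI[where S="ball 0 (2*\<epsilon>)"]) auto
  have derP2: "((\<lambda>s. f (x + axis k s)) has_field_derivative P k (x + axis k s0)) (at s0)"
    if xs: "x + axis k s0 \<in> cball z \<epsilon>" for x k s0
  proof -
    have "((\<lambda>s. f (x + axis k s0 + axis k s)) has_field_derivative P k (x + axis k s0)) (at (s0 + - s0))"
      using derP[OF xs] by simp
    then have "((\<lambda>s. f (x + axis k s0 + axis k (s + - s0))) has_field_derivative P k (x + axis k s0)) (at s0)"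
      by (subst (asm) DERIV_shift)
    moreover have "(\<lambda>s. f (x + axis k s0 + axis k (s + - s0))) = (\<lambda>s. f (x + axis k s))"
      by (rule ext) (simp add: add.assoc flip: axis_add_c)
    ultimately show ?thesis by simp
  qed
  have Pcont: "\<exists>\<delta>>0. \<delta> \<le> \<epsilon> \<and> (\<forall>k y. dist y z < \<delta> \<longrightarrow> norm (P k y - P k z) \<le> \<eta>)"
    if \<eta>: "\<eta> > 0" for \<eta>
  proof -
    have "uniformly_continuous_on (cball z (3*\<epsilon>)) f"
      using cont \<epsilon>(2) by (intro compact_uniformly_continuous continuous_on_subset[OF cont]) auto
    moreover have "\<eta> * \<epsilon> > 0" using \<eta> \<epsilon> by simp
    ultimately obtain d where d: "d > 0"
      "\<And>u v. u \<in> cball z (3*\<epsilon>) \<Longrightarrow> v \<in> cball z (3*\<epsilon>) \<Longrightarrow> dist v u < d \<Longrightarrow> dist (f v) (f u) < \<eta> * \<epsilon>"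
      unfolding uniformly_continuous_on_def by metis
    define \<delta> where "\<delta> = min d \<epsilon>"
    have "norm (P k y - P k z) \<le> \<eta>" if y: "dist y z < \<delta>" for k y
    proof -
      define D where "D s = f (y + axis k s) - f (z + axis k s)" for s
      have yc: "y \<in> cball z \<epsilon>" and zc: "z \<in> cball z \<epsilon>"
        using y \<epsilon> by (auto simp: \<delta>_def dist_commute)
      have hD: "D holomorphic_on ball 0 (2*\<epsilon>)"
        unfolding D_def using hol[OF yc] hol[OF zc] by (intro holomorphic_on_diff)
      have "norm ((deriv ^^ 1) D 0) \<le> fact 1 * (\<eta> * \<epsilon>) / \<epsilon> ^ 1"
      proof (rule Cauchy_inequality)
        show "D holomorphic_on ball 0 \<epsilon>"
          using hD by (rule holomorphic_on_subset) (use \<epsilon> in auto)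
        show "continuous_on (cball 0 \<epsilon>) D"
          using hD by (intro holomorphic_on_imp_continuous_on holomorphic_on_subset[OF hD]) (use \<epsilon> in auto)
        show "0 < \<epsilon>" by fact
        fix s :: complex assume s: "norm (0 - s) = \<epsilon>"
        have ns: "norm (axis k s :: complex ^ 'n) \<le> \<epsilon>" using norm_axis_le[of k s] s by simp
        have "z + axis k s \<in> cball z (3*\<epsilon>)" using ns \<epsilon> by (simp add: dist_norm)
        moreover have "y + axis k s \<in> cball z (3*\<epsilon>)"
        proof -
          have "dist z (y + axis k s) \<le> dist z y + dist y (y + axis k s)" by (rule dist_triangle)
          also have "\<dots> \<le> \<epsilon> + \<epsilon>" using yc ns by (intro add_mono) (auto simp: dist_norm)
          finally show ?thesis using \<epsilon> by simp
        qed
        moreover have "dist (y + axis k s) (z + axis k s) < d"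
          using y by (simp add: dist_norm \<delta>_def)
        ultimately have "dist (f (y + axis k s)) (f (z + axis k s)) < \<eta> * \<epsilon>" using d(2) by blast
        then show "norm (D s) \<le> \<eta> * \<epsilon>" by (simp add: D_def dist_norm)
      qed
      moreover have "deriv D 0 = P k y - P k z"
        unfolding D_def P_def
        using derP[OF yc, of k] derP[OF zc, of k]
        by (intro deriv_diff) (auto simp: field_differentiable_def)
      ultimately show ?thesis using \<epsilon> by simp
    qed
    then show ?thesis using d \<epsilon> by (intro exI[of _ \<delta>]) (auto simp: \<delta>_def)
  qed
  define L where "L h = (\<Sum>j\<in>UNIV. h $ j * P j z)" for h :: "complex ^ 'n"
  have blL: "bounded_linear L"
    unfolding L_def by (intro bounded_linear_sum bounded_linear_mult_const bounded_linear_vec_nth)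
  have clL: "complex_linear_vec L"
    unfolding complex_linear_vec_def
    using blL by (auto simp: L_def sum_distrib_left mult.assoc)
  have "(f has_derivative L) (at z)"
    unfolding has_derivative_at_alt
  proof (intro conjI allI impI blL)
    fix e :: real assume e: "e > 0"
    define \<eta> where "\<eta> = e / CARD('n)"
    have \<eta>: "\<eta> > 0" using e by (simp add: \<eta>_def)
    obtain \<delta> where \<delta>: "\<delta> > 0" "\<delta> \<le> \<epsilon>" "\<And>k y. dist y z < \<delta> \<Longrightarrow> norm (P k y - P k z) \<le> \<eta>"
      using Pcont[OF \<eta>] by blast
    show "\<exists>d>0. \<forall>y. norm (y - z) < d \<longrightarrow> norm (f y - f z - L (y - z)) \<le> e * norm (y - z)"
    proof (intro exI[of _ "\<delta>/2"] conjI allI impI)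
      show "\<delta>/2 > 0" using \<delta> by simp
      fix y assume y: "norm (y - z) < \<delta>/2"
      define h where "h = y - z"
      define hS where "hS T = (\<chi> j. if j \<in> T then h $ j else 0)" for T
      have nhS: "norm (hS T) \<le> norm h" for T
        by (rule norm_le_componentwise_cart) (auto simp: hS_def)
      have nh: "norm h < \<delta>/2" using y by (simp add: h_def)
      have claim: "norm (f (z + hS T) - f z - (\<Sum>j\<in>T. h $ j * P j z)) \<le> card T * \<eta> * norm h"
        if "finite T" for T
        using that
      proof (induction T rule: finite_induct)
        case empty
        have "hS {} = 0" by (simp add: hS_def vec_eq_iff)
        then show ?case by simp
      next
        case (insert k T)
        define x where "x = z + hS T"
        have xk: "z + hS (insert k T) = x + axis k (h $ k)"
          by (simp add: x_def hS_def vec_eq_iff axis_def insert.hyps)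
        define \<phi> where "\<phi> s = f (x + axis k s) - s * P k z" for s
        define C where "C = cball (0::complex) (norm (h $ k))"
        have inC: "dist (x + axis k s) z < \<delta>" if "s \<in> C" for s
        proof -
          have "norm (hS T + axis k s) \<le> norm (hS T) + norm (axis k s :: complex ^ 'n)"
            by (rule norm_triangle_ineq)
          also have "\<dots> \<le> norm h + norm h"
            using nhS[of T] norm_axis_le[of k s] that Finite_Cartesian_Product.norm_nth_le[of h k]
            by (intro add_mono) (auto simp: C_def)
          finally show ?thesis using nh by (simp add: x_def dist_norm)
        qed
        have bnd: "norm (\<phi> (h $ k) - \<phi> 0) \<le> \<eta> * norm (h $ k - 0)"
        proof (rule field_differentiable_bound[where S=C])
          show "convex C" by (simp add: C_def)
          fix s assume s: "s \<in> C"
          have sc: "x + axis k s \<in> cball z \<epsilon>"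
            using inC[OF s] \<delta> by (simp add: dist_commute)
          have "((\<lambda>s. s * P k z) has_field_derivative P k z) (at s)"
            by (auto intro!: derivative_eq_intros)
          then have "(\<phi> has_field_derivative (P k (x + axis k s) - P k z)) (at s)"
            unfolding \<phi>_def by (intro DERIV_diff derP2[OF sc])
          then show "(\<phi> has_field_derivative (P k (x + axis k s) - P k z)) (at s within C)"
            by (rule has_field_derivative_at_within)
          show "norm (P k (x + axis k s) - P k z) \<le> \<eta>" using \<delta>(3) inC[OF s] by blast
        qed (auto simp: C_def)
        have phid: "\<phi> (h $ k) - \<phi> 0 = f (z + hS (insert k T)) - f x - h $ k * P k z"
        proof -
          have a0: "axis k 0 = (0::complex^'n)" by (simp add: vec_eq_iff axis_def)
          show ?thesis unfolding \<phi>_def xk a0 by simp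
        qed
        have A0: "norm (f (z + hS (insert k T)) - f x - h $ k * P k z) \<le> \<eta> * norm (h $ k)"
          using bnd by (simp add: phid)
        have "\<eta> * norm (h $ k) \<le> \<eta> * norm h"
          using \<eta> Finite_Cartesian_Product.norm_nth_le[of h k] by (intro mult_left_mono) auto
        with A0 have A: "norm (f (z + hS (insert k T)) - f x - h $ k * P k z) \<le> \<eta> * norm h"
          by linarith
        have E: "f (z + hS (insert k T)) - f z - (\<Sum>j\<in>insert k T. h $ j * P j z)
            = (f (z + hS (insert k T)) - f x - h $ k * P k z) + (f x - f z - (\<Sum>j\<in>T. h $ j * P j z))"
          using insert.hyps by (simp add: algebra_simps)
        have "norm (f (z + hS (insert k T)) - f z - (\<Sum>j\<in>insert k T. h $ j * P j z))
            \<le> norm (f (z + hS (insert k T)) - f x - h $ k * P k z) + norm (f x - f z - (\<Sum>j\<in>T. h $ j * P j z))"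
          unfolding E by (rule norm_triangle_ineq)
        also have "\<dots> \<le> \<eta> * norm h + card T * \<eta> * norm h"
          using A insert.IH[folded x_def] by (rule add_mono)
        also have "\<dots> = card (insert k T) * \<eta> * norm h"
          using insert.hyps by (simp add: algebra_simps)
        finally show ?case .
      qed
      have "hS UNIV = h" by (simp add: hS_def vec_eq_iff)
      then have "norm (f y - f z - L h) \<le> CARD('n) * \<eta> * norm h"
        using claim[of UNIV] by (simp add: h_def L_def)
      then show "norm (f y - f z - L (y - z)) \<le> e * norm (y - z)"
        by (simp add: \<eta>_def h_def)
    qed
  qed
  then show ?thesis using clL by blast
qed


theorem mainTheorem10:
  fixes K :: "'n::finite \<Rightarrow> complex set"
  assumes "\<And>i. compact (K i)"
    and "\<And>i. closure (interior (K i)) = K i"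
  shows "A_alg (prod_set K) = A_D (prod_set K)"
proof
  show "A_alg (prod_set K) \<subseteq> A_D (prod_set K)"
  proof
    fix f assume fA: "f \<in> A_alg (prod_set K)"
    have "(f \<circ> \<phi>) holomorphic_on ball a r"
      if "r > 0" "\<forall>i. (\<lambda>z. \<phi> z $ i) holomorphic_on ball a r" "\<phi> ` ball a r \<subseteq> prod_set K"
      for a r and \<phi> :: "complex \<Rightarrow> complex ^ 'n"
      using A_sub_AD[OF assms fA] that by blast
    then show "f \<in> A_D (prod_set K)" using fA by (auto simp: A_D_def A_alg_def)
  qed
  show "A_D (prod_set K) \<subseteq> A_alg (prod_set K)"
  proof
    fix f assume fD: "f \<in> A_D (prod_set K)"
    then have "holo_vec_on f (interior (prod_set K))"
      unfolding holo_vec_on_def using AD_point by blast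
    then show "f \<in> A_alg (prod_set K)" using fD by (auto simp: A_D_def A_alg_def)
  qed
qed

end
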